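(* Let $\mu>1/2$, $0<\nu<1/2$. Let $\mathfrak F\in C^1(\mathbb{R})$ be such that $\mathfrak F'$ is even, nonnegative, and decreasing on $[0,\infty)$, and $\mathfrak F(\infty)-\mathfrak F(-\infty)=(\mu-\nu)\pi$. Then the function $x\mapsto H\mathfrak F(x)-H\mathfrak F(0)$ is even on $\mathbb{R}$ and increasing on $[0,\infty)$. Moreover, for all $y>x\ge0$, $$0\le H\mathfrak F(y)-H\mathfrak F(x)=\frac1\pi\int_x^y\frac{\mathfrak F(\gamma)-\mathfrak F(-\gamma)}{\gamma}\,d\gamma+\mathfrak R(x,y),\qquad\text{where } -2(\mu-\nu)\le\mathfrak R(x,y)\le 2(\mu-\nu).$$
   Context: Since $\mathfrak F$ does not decay at infinity, differences of its Hilbert transform are defined by $H\mathfrak F(y)-H\mathfrak F(x):=\frac1\pi\int_0^\infty\frac{\mathfrak F(y-\gamma)-\mathfrak F(y+\gamma)-\mathfrak F(x-\gamma)+\mathfrak F(x+\gamma)}{\gamma}\,d\gamma$, consistent with the Hilbert transform $Hf(x)=\frac1\pi\mathrm{p.v.}\int\frac{f(y)}{x-y}dy=\frac1\pi\int_0^\infty\frac{f(x-\gamma)-f(x+\gamma)}{\gamma}d\gamma$. *)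

theory Defs
  imports "HOL-Analysis.Analysis"
begin

text \<open>Difference of Hilbert transforms, H F(y) - H F(x), as defined in the paper
  (Henstock-Kurzweil integral over (0, infinity)).\<close>
definition HFdiff :: "(real \<Rightarrow> real) \<Rightarrow> real \<Rightarrow> real \<Rightarrow> real" where
  "HFdiff F x y = (1 / pi) * integral {0<..}
     (\<lambda>\<gamma>. (F (y - \<gamma>) - F (y + \<gamma>) - F (x - \<gamma>) + F (x + \<gamma>)) / \<gamma>)"

end

theory Submission
  imports Defs
begin


locale hset =
  fixes F f :: "real \<Rightarrow> real" and K :: real
  assumes deriv: "\<And>x. (F has_real_derivative f x) (at x)"
    and even: "\<And>x. f (- x) = f x"
    and nonneg: "\<And>x. 0 \<le> f x"
    and decr: "\<And>a b. 0 \<le> a \<Longrightarrow> a \<le> b \<Longrightarrow> f b \<le> f a"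
    and Kb: "\<And>t. F t \<le> F 0 + K"
begin

lemma K_nonneg: "0 \<le> K" using Kb[of 0] by simp

lemma odd: "F (- t) = 2 * F 0 - F t"
proof -
  have "\<forall>x. ((\<lambda>t. F t + F (- t)) has_real_derivative 0) (at x)"
  proof
    fix x
    have a: "((\<lambda>t. F (- t)) has_real_derivative (f (-x) * (-1))) (at x)"
      by (rule DERIV_chain2[OF deriv]) (auto intro!: derivative_eq_intros)
    have "((\<lambda>t. F t + F (- t)) has_real_derivative (f x + f (-x) * (-1))) (at x)"
      by (intro DERIV_add deriv a)
    then show "((\<lambda>t. F t + F (- t)) has_real_derivative 0) (at x)" using even[of x] by simp
  qed
  from DERIV_isconst_all[OF this, of t 0] show ?thesis by simp
qed

lemma monoF: "a \<le> b \<Longrightarrow> F a \<le> F b"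
  by (rule DERIV_nonneg_imp_nondecreasing) (use deriv nonneg in blast)+

lemma mvt_up: assumes "0 \<le> a" "a \<le> b" shows "F b - F a \<le> (b - a) * f a"
proof (cases "a = b")
  case False
  then have "a < b" using assms by simp
  from MVT2[OF this, of F f] deriv obtain z where z: "a < z" "z < b" "F b - F a = (b - a) * f z" by blast
  have "f z \<le> f a" using decr[of a z] z assms by simp
  then show ?thesis using z assms by (simp add: mult_left_mono)
qed simp

lemma mvt_low: assumes "0 \<le> a" "a \<le> b" shows "(b - a) * f b \<le> F b - F a"
proof (cases "a = b")
  case False
  then have "a < b" using assms by simp
  from MVT2[OF this, of F f] deriv obtain z where z: "a < z" "z < b" "F b - F a = (b - a) * f z" by blast
  have "f b \<le> f z" using decr[of z b] z assms by simp
  then show ?thesis using z assms by (simp add: mult_left_mono)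
qed simp

lemma conc: assumes "0 < a" "a \<le> b" shows "F b - F a \<le> (b - a) / a * K"
proof -
  have 1: "F b - F a \<le> (b - a) * f a" using mvt_up assms by simp
  have 2: "a * f a \<le> F a - F 0" using mvt_low[of 0 a] assms by simp
  have "(b - a) * f a \<le> (b - a) / a * (F a - F 0)"
  proof -
    have "(b - a) * f a = (b - a) / a * (a * f a)" using assms by (simp add: field_simps)
    also have "\<dots> \<le> (b - a) / a * (F a - F 0)" using 2 assms by (intro mult_left_mono) auto
    finally show ?thesis .
  qed
  also have "\<dots> \<le> (b - a) / a * K" using Kb[of a] assms by (intro mult_left_mono) auto
  finally show ?thesis using 1 by simp
qed

lemma Dmono: assumes "0 \<le> x" "x \<le> y" "0 \<le> c"
  shows "F (y + c) - F (y - c) \<le> F (x + c) - F (x - c)"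
proof -
  have "(\<lambda>t. F (t + c) - F (t - c)) y \<le> (\<lambda>t. F (t + c) - F (t - c)) x"
  proof (rule DERIV_nonpos_imp_nonincreasing[OF assms(2)])
    fix t assume t: "x \<le> t" "t \<le> y"
    have a: "((\<lambda>t. F (t + c)) has_real_derivative (f (t + c) * 1)) (at t)"
      by (rule DERIV_chain2[OF deriv]) (auto intro!: derivative_eq_intros)
    have b: "((\<lambda>t. F (t - c)) has_real_derivative (f (t - c) * 1)) (at t)"
      by (rule DERIV_chain2[OF deriv]) (auto intro!: derivative_eq_intros)
    have d: "((\<lambda>t. F (t + c) - F (t - c)) has_real_derivative (f (t + c) * 1 - f (t - c) * 1)) (at t)"
      by (intro DERIV_diff a b)
    have "f (t + c) \<le> f (t - c)"
    proof (cases "t - c \<ge> 0")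
      case True
      then show ?thesis using decr[of "t-c" "t+c"] assms by simp
    next
      case False
      have "f (t - c) = f (c - t)" using even[of "c - t"] by simp
      then show ?thesis using decr[of "c-t" "t+c"] False t assms by simp
    qed
    then show "\<exists>y. ((\<lambda>t. F (t + c) - F (t - c)) has_real_derivative y) (at t) \<and> y \<le> 0"
      using d by auto
  qed
  then show ?thesis by simp
qed


definition num :: "real \<Rightarrow> real \<Rightarrow> real \<Rightarrow> real" where
  "num x y c = F (y - c) - F (y + c) - F (x - c) + F (x + c)"

lemma num_nonneg: "0 \<le> x \<Longrightarrow> x \<le> y \<Longrightarrow> 0 \<le> c \<Longrightarrow> 0 \<le> num x y c"
  using Dmono[of x y c] by (simp add: num_def)

lemma F_ge0: "0 \<le> t \<Longrightarrow> F 0 \<le> F t" using monoF by simp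

lemma reg1_K: assumes "0 \<le> x" "x \<le> y" "0 \<le> c" "c \<le> x" shows "num x y c \<le> K"
  using monoF[of "y - c" "y + c"] Kb[of "x + c"] F_ge0[of "x - c"] assms by (simp add: num_def)

lemma reg1_c: assumes "0 \<le> x" "x \<le> y" "0 \<le> c" "c < x" shows "num x y c \<le> 2 * c / (x - c) * K"
  using monoF[of "y - c" "y + c"] conc[of "x - c" "x + c"] assms by (simp add: num_def)

lemma reg3_pre: assumes "0 \<le> x" "x \<le> y" "y \<le> c" shows "num x y c \<le> F (c - x) - F (c - y)"
proof -
  have "F (y - c) = 2 * F 0 - F (c - y)" using odd[of "c - y"] by simp
  moreover have "F (x - c) = 2 * F 0 - F (c - x)" using odd[of "c - x"] by simp
  moreover have "F (x + c) \<le> F (y + c)" using monoF assms by simp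
  ultimately show ?thesis by (simp add: num_def)
qed

lemma reg3_K: assumes "0 \<le> x" "x \<le> y" "y \<le> c" shows "num x y c \<le> K"
  using reg3_pre[OF assms] Kb[of "c - x"] F_ge0[of "c - y"] assms by simp

lemma reg3_c: assumes "0 \<le> x" "x \<le> y" "y < c" shows "num x y c \<le> (y - x) / (c - y) * K"
  using reg3_pre[of x y c] conc[of "c - y" "c - x"] assms by simp

definition T1 where "T1 y c = F (y + c) - F (y - c)"
definition T2 where "T2 x c = 2 * F c - F (c - x) - F (c + x)"

lemma psi_ident: "(F c - F (- c)) - num x y c = T1 y c + T2 x c"
  using odd[of c] odd[of "c - x"] by (simp add: num_def T1_def T2_def algebra_simps)

lemma T1_nonneg: "0 \<le> c \<Longrightarrow> 0 \<le> T1 y c" using monoF[of "y - c" "y + c"] by (simp add: T1_def)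

lemma T2_nonneg: assumes "0 \<le> x" "x \<le> c" shows "0 \<le> T2 x c"
  using mvt_up[of c "c + x"] mvt_low[of "c - x" c] assms by (simp add: T2_def)

lemma T1_K: assumes "0 \<le> c" "c \<le> y" shows "T1 y c \<le> K"
  using Kb[of "y + c"] F_ge0[of "y - c"] assms by (simp add: T1_def)

lemma T1_c: assumes "0 \<le> c" "c < y" shows "T1 y c \<le> 2 * c / (y - c) * K"
  using conc[of "y - c" "y + c"] assms by (simp add: T1_def)

lemma T2_K: assumes "0 \<le> x" "x \<le> c" shows "T2 x c \<le> K"
  using Kb[of c] F_ge0[of "c - x"] monoF[of c "c + x"] assms by (simp add: T2_def)

lemma T2_c: assumes "0 \<le> x" "x < c" shows "T2 x c \<le> x / (c - x) * K"
  using conc[of "c - x" c] monoF[of c "c + x"] assms by (simp add: T2_def)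

lemma T2_0: "T2 0 c = 0" by (simp add: T2_def)

lemma psi_bound: assumes "0 \<le> c" shows "0 \<le> F c - F (- c)" "F c - F (- c) \<le> 2 * c * f 0"
  using odd[of c] mvt_up[of 0 c] F_ge0[of c] assms by auto

end



definition UA :: "real \<Rightarrow> real \<Rightarrow> real \<Rightarrow> real" where
  "UA K a c = (if c \<le> a / 4 then 8 * K / (3 * a) else K / c)"
definition UB :: "real \<Rightarrow> real \<Rightarrow> real \<Rightarrow> real \<Rightarrow> real" where
  "UB K a b c = (if c \<le> a + b then K / c else (a + b) * K / c ^ 2)"

lemma int_inv: fixes a b K :: real assumes "0 < a" "a \<le> b" shows "((\<lambda>c. K / c) has_integral (K * ln b - K * ln a)) {a..b}"
proof -
  have "((\<lambda>c. K / c) has_integral ((\<lambda>c. K * ln c) b - (\<lambda>c. K * ln c) a)) {a..b}"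
  proof (rule fundamental_theorem_of_calculus[of a b "\<lambda>c. K * ln c" "\<lambda>c. K / c"])
  show "a \<le> b" by fact
  fix x assume x: "x \<in> {a..b}"
  then have "x > 0" using assms by auto
  have "((\<lambda>c. K * ln c) has_real_derivative (K * inverse x)) (at x)"
    by (intro DERIV_cmult DERIV_ln \<open>x > 0\<close>)
  then show "((\<lambda>c. K * ln c) has_vector_derivative K / x) (at x within {a..b})"
    by (simp add: has_real_derivative_iff_has_vector_derivative[symmetric] divide_inverse
        has_field_derivative_at_within)
qed
  then show ?thesis by simp
qed

lemma Ioc_iff: fixes h :: "real \<Rightarrow> real"
  shows "(h has_integral I) {a..b} \<longleftrightarrow> (h has_integral I) {a<..b}"
proof (rule has_integral_spike_set_eq)
  show "negligible {x \<in> {a..b} - {a<..b}. h x \<noteq> 0}"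
    by (rule negligible_subset[OF negligible_sing[of a]]) auto
  have "{x \<in> {a<..b} - {a..b}. h x \<noteq> 0} = {}" by auto
  then show "negligible {x \<in> {a<..b} - {a..b}. h x \<noteq> 0}" by (metis negligible_empty)
qed

lemma Ioi_iff: fixes h :: "real \<Rightarrow> real"
  shows "(h has_integral I) {a..} \<longleftrightarrow> (h has_integral I) {a<..}"
proof (rule has_integral_spike_set_eq)
  show "negligible {x \<in> {a..} - {a<..}. h x \<noteq> 0}"
    by (rule negligible_subset[OF negligible_sing[of a]]) auto
  have "{x \<in> {a<..} - {a..}. h x \<noteq> 0} = {}" by auto
  then show "negligible {x \<in> {a<..} - {a..}. h x \<noteq> 0}" by (metis negligible_empty)
qed

lemma Ioc_from_Icc: fixes h :: "real \<Rightarrow> real" assumes "(h has_integral I) {a..b}" shows "(h has_integral I) {a<..b}"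
  using assms Ioc_iff by blast
lemma Ioi_from_Ici: fixes h :: "real \<Rightarrow> real" assumes "(h has_integral I) {a..}" shows "(h has_integral I) {a<..}"
  using assms Ioi_iff by blast

lemma Ioc_int_eq: fixes h :: "real \<Rightarrow> real" assumes "h integrable_on {a<..b}"
  shows "h integrable_on {a..b}" "integral {a..b} h = integral {a<..b} h"
  using assms Ioc_iff by (metis has_integral_integrable_integral)+

lemma Ioc_int_eq_rev: fixes h :: "real \<Rightarrow> real" assumes "h integrable_on {a..b}"
  shows "h integrable_on {a<..b}"
  using assms Ioc_iff by (metis has_integral_integrable_integral)

lemma UA_int: assumes "0 < a" shows "(UA K a has_integral K * (2/3 + ln 4)) {0<..a}"
proof -
  have 1: "((\<lambda>c. 8 * K / (3 * a)) has_integral (8 * K / (3 * a)) * (a/4 - 0)) {0..a/4}"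
    using has_integral_const_real[of "8 * K / (3 * a)" 0 "a/4"] assms by simp
  have 1: "(UA K a has_integral (8 * K / (3 * a)) * (a/4 - 0)) {0..a/4}"
    by (rule has_integral_eq[OF _ 1]) (auto simp: UA_def)
  have 2: "(UA K a has_integral (K * ln a - K * ln (a/4))) {a/4..a}"
    by (rule has_integral_spike[OF negligible_sing[of "a/4"] _ int_inv]) (use assms in \<open>auto simp: UA_def\<close>)
  have "(UA K a has_integral ((8 * K / (3 * a)) * (a/4 - 0) + (K * ln a - K * ln (a/4)))) ({0..a/4} \<union> {a/4..a})"
    by (rule has_integral_Un[OF 1 2]) (rule negligible_subset[OF negligible_sing[of "a/4"]], auto)
  moreover have "{0..a/4} \<union> {a/4..a} = {0..a}" using assms by auto
  moreover have "(8 * K / (3 * a)) * (a/4 - 0) + (K * ln a - K * ln (a/4)) = K * (2/3 + ln 4)"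
    using assms by (simp add: ln_div field_simps)
  ultimately show ?thesis using Ioc_from_Icc by metis
qed
lemma UA_int0: assumes "0 < a" shows "(UA K a has_integral K * (2/3 + ln 4)) {0..a}"
  using UA_int[OF assms] Ioc_iff by blast
lemma dummy: True
proof -
  show ?thesis by simp
qed

lemma UB_int: assumes "0 < a" "0 \<le> b" shows "(UB K a b has_integral (K * (ln (a + b) - ln a) + K)) {a<..}"
proof -
  have 1: "(UB K a b has_integral (K * ln (a + b) - K * ln a)) {a..a+b}"
    by (rule has_integral_eq[OF _ int_inv]) (use assms in \<open>auto simp: UB_def\<close>)
  have i2: "((\<lambda>x. 1 / x ^ 2) has_integral 1 / (a + b)) {a+b..}"
    using has_integral_inverse_power_to_inf[of 2 "a+b"] assms by simp
  have i2: "((\<lambda>x. ((a + b) * K) * (1 / x ^ 2)) has_integral ((a + b) * K) * (1 / (a + b))) {a+b..}"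
    by (rule has_integral_mult_right[OF i2])
  have 2: "(UB K a b has_integral K) {a+b..}"
  proof -
    have e: "((a + b) * K) * (1 / (a + b)) = K" using assms by simp
    show ?thesis
      by (intro has_integral_eq[OF _ i2[unfolded e]]) (use assms in \<open>auto simp: UB_def power2_eq_square\<close>)
  qed
  have "(UB K a b has_integral ((K * ln (a + b) - K * ln a) + K)) ({a..a+b} \<union> {a+b..})"
    by (rule has_integral_Un[OF 1 2]) (rule negligible_subset[OF negligible_sing[of "a+b"]], auto)
  moreover have "{a..a+b} \<union> {a+b..} = {a..}" using assms by auto
  ultimately show ?thesis using Ioi_from_Ici by (metis right_diff_distrib)
qed
lemma UB_int0: assumes "0 < a" "0 \<le> b" shows "(UB K a b has_integral (K * (ln (a + b) - ln a) + K)) {a..}"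
  using UB_int[OF assms] Ioi_iff by blast
lemma dummy2: True
proof -
  show ?thesis by simp
qed

lemma ln2_bound: "ln 2 \<le> (7/9::real)"
proof -
  have "1 + 7/9 + (7/9)\<^sup>2 / 2 \<le> exp (7/9::real)" by (rule exp_lower_Taylor_quadratic) simp
  then have "2 \<le> exp (7/9::real)" by (simp add: power2_eq_square)
  then show ?thesis by (metis exp_gt_zero ln_exp ln_le_cancel_iff zero_less_numeral)
qed




lemma divA: fixes N c a K :: real
  assumes "N \<le> 2*c/(a-c)*K" "0 < c" "4*c \<le> a" "0 \<le> K"
  shows "N / c \<le> 8*K/(3*a)"
proof -
  have ac: "a - c > 0" using assms by simp
  have "N / c \<le> (2*c/(a-c)*K) / c" by (rule divide_right_mono[OF assms(1)]) (use assms in simp)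
  also have "\<dots> = 2*K/(a-c)" using assms by (simp add: field_simps)
  also have "\<dots> \<le> 8*K/(3*a)"
  proof -
    have "2*K*(3*a) \<le> 8*K*(a-c)"
    proof -
      have "K * (8*c) \<le> K * (2*a)" using assms by (intro mult_left_mono) auto
      then show ?thesis by (simp add: algebra_simps)
    qed
    then show ?thesis using ac assms by (simp add: divide_simps)
  qed
  finally show ?thesis .
qed

lemma divB: fixes N c a b K :: real
  assumes "N \<le> b/(c-a)*K" "0 < a" "a + b < c" "0 \<le> b" "0 \<le> K"
  shows "N / c \<le> (a+b)*K/c^2"
proof -
  have ca: "c - a > 0" "c > 0" using assms by auto
  have "N / c \<le> (b/(c-a)*K) / c" by (rule divide_right_mono[OF assms(1)]) (use ca in simp)
  also have "\<dots> = (b*K) / ((c-a)*c)" using ca by (simp add: field_simps)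
  also have "\<dots> \<le> (a+b)*K/c^2"
  proof -
    have "b*c \<le> (a+b)*(c-a)"
    proof -
      have "0 \<le> a * (c - a - b)" using assms by simp
      then show ?thesis by (simp add: algebra_simps)
    qed
    then have "b*c*K \<le> (a+b)*(c-a)*K" using assms by (intro mult_right_mono) auto
    then have "(b*c*K) / ((c-a)*c*c) \<le> ((a+b)*(c-a)*K) / ((c-a)*c*c)"
      using ca by (intro divide_right_mono) auto
    moreover have "b*K/((c-a)*c) = (b*c*K)/((c-a)*c*c)" using ca by simp
    moreover have "(a+b)*K/c^2 = ((a+b)*(c-a)*K)/((c-a)*c*c)" using ca by (simp add: power2_eq_square)
    ultimately show ?thesis by simp
  qed
  finally show ?thesis .
qed




context hset begin

definition g where "g x y c = num x y c / c"
definition psi where "psi c = (F c - F (- c)) / c"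

lemma isCont_F: "isCont F t" using DERIV_isCont[OF deriv] .

lemma isCont_F_comp[continuous_intros]: "isCont h t \<Longrightarrow> isCont (\<lambda>x. F (h x)) t"
  using isCont_o2[OF _ isCont_F] by blast

lemma g_eq: "g x y = (\<lambda>c. (F (y - c) - F (y + c) - F (x - c) + F (x + c)) / c)"
  by (rule ext) (simp add: g_def num_def)
lemma psi_eq: "psi = (\<lambda>c. (F c - F (- c)) / c)"
  by (rule ext) (simp add: psi_def)

lemma cont_g: "S \<subseteq> {0<..} \<Longrightarrow> continuous_on S (g x y)"
  unfolding g_eq by (intro continuous_at_imp_continuous_on ballI) (auto intro!: continuous_intros)

lemma cont_psi: "S \<subseteq> {0<..} \<Longrightarrow> continuous_on S psi"
  unfolding psi_eq by (intro continuous_at_imp_continuous_on ballI) (auto intro!: continuous_intros)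

lemma g_nonneg: "0 \<le> x \<Longrightarrow> x \<le> y \<Longrightarrow> 0 < c \<Longrightarrow> 0 \<le> g x y c"
  using num_nonneg[of x y c] by (simp add: g_def)

lemma UA_nonneg: "0 < a \<Longrightarrow> 0 < c \<Longrightarrow> 0 \<le> UA K a c"
  using K_nonneg by (simp add: UA_def)

lemma UB_nonneg: "0 < c \<Longrightarrow> 0 \<le> a + b \<Longrightarrow> 0 \<le> UB K a b c"
  using K_nonneg by (simp add: UB_def)

lemma gA: assumes "0 < x" "x \<le> y" "0 < c" "c \<le> x" shows "g x y c \<le> UA K x c"
proof (cases "c \<le> x / 4")
  case True
  have "num x y c \<le> 2 * c / (x - c) * K" using reg1_c[of x y c] assms True by simp
  from divA[OF this] True assms K_nonneg show ?thesis by (simp add: g_def UA_def)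
next
  case False
  have "num x y c \<le> K" using reg1_K[of x y c] assms by simp
  then show ?thesis using False assms by (simp add: g_def UA_def divide_right_mono)
qed

lemma gB: assumes "0 \<le> x" "x < y" "y \<le> c" shows "g x y c \<le> UB K y (y - x) c"
proof (cases "c \<le> y + (y - x)")
  case True
  have "num x y c \<le> K" using reg3_K[of x y c] assms by simp
  then show ?thesis using True assms by (simp add: g_def UB_def divide_right_mono)
next
  case False
  have "num x y c \<le> (y - x) / (c - y) * K" using reg3_c[of x y c] assms False by simp
  from divB[OF this] False assms K_nonneg show ?thesis by (simp add: g_def UB_def)
qed

lemma gC: assumes "0 \<le> x" "x \<le> c" "c \<le> y" "0 < c"
  shows "0 \<le> psi c - g x y c" "psi c - g x y c \<le> UA K y c + (if 0 < x then UB K x x c else 0)"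
proof -
  have e: "psi c - g x y c = T1 y c / c + T2 x c / c"
    using psi_ident[of c x y] assms by (simp add: psi_def g_def diff_divide_distrib[symmetric] add_divide_distrib[symmetric])
  have t1: "0 \<le> T1 y c" "0 \<le> T2 x c" using T1_nonneg T2_nonneg assms by auto
  then show "0 \<le> psi c - g x y c" using e assms by simp
  have a: "T1 y c / c \<le> UA K y c"
  proof (cases "c \<le> y / 4")
    case True
    have "T1 y c \<le> 2 * c / (y - c) * K" using T1_c[of c y] assms True by simp
    from divA[OF this] True assms K_nonneg show ?thesis by (simp add: UA_def)
  next
    case False
    have "T1 y c \<le> K" using T1_K[of c y] assms by simp
    then show ?thesis using False assms by (simp add: UA_def divide_right_mono)
  qed
  have b: "T2 x c / c \<le> (if 0 < x then UB K x x c else 0)"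
  proof (cases "0 < x")
    case False
    then have "x = 0" using assms by simp
    then show ?thesis using T2_0 by simp
  next
    case xp: True
    show ?thesis
    proof (cases "c \<le> x + x")
      case True
      have "T2 x c \<le> K" using T2_K[of x c] assms by simp
      then show ?thesis using True xp assms by (simp add: UB_def divide_right_mono)
    next
      case False
      have "T2 x c \<le> x / (c - x) * K" using T2_c[of x c] assms False by simp
      from divB[OF this] False xp assms K_nonneg show ?thesis by (simp add: UB_def)
    qed
  qed
  show "psi c - g x y c \<le> UA K y c + (if 0 < x then UB K x x c else 0)" using e a b by simp
qed

lemma psi_bd: assumes "0 < c" shows "0 \<le> psi c" "psi c \<le> 2 * f 0"
  using psi_bound[of c] assms by (auto simp: psi_def divide_simps mult_ac)

lemma g_le_psi: assumes "0 \<le> x" "x \<le> c" "c \<le> y" "0 < c" shows "g x y c \<le> psi c"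
  using gC(1)[OF assms] by simp

end



lemma ln4: "ln (4::real) = 2 * ln 2"
  using ln_mult[of 2 2] by simp

context hset begin

lemma main_int: assumes x0: "0 \<le> x" and xy: "x < y"
  shows "g x y integrable_on {0<..}" "0 \<le> integral {0<..} (g x y)"
    "integral {0<..} (g x y) - integral {x..y} psi \<le> K * (2/3 + ln 4) + K * (ln 2 + 1)"
    "- (K * (2/3 + ln 4) + K * (ln 2 + 1)) \<le> integral {0<..} (g x y) - integral {x..y} psi"
proof -
  define CA where "CA = K * (2/3 + ln 4)"
  define CB where "CB = K * (ln 2 + 1)"
  have y0: "0 < y" using x0 xy by simp
  have CB0: "0 \<le> CB" unfolding CB_def using K_nonneg by (simp add: ln_ge_zero)
  obtain i1 where i1: "(g x y has_integral i1) {0<..x}" "0 \<le> i1" "i1 \<le> CA"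
  proof (cases "x = 0")
    case True
    then have "(g x y has_integral 0) {0<..x}" by simp
    moreover have "0 \<le> CA" unfolding CA_def using K_nonneg by (simp add: ln_ge_zero)
    ultimately show ?thesis using that by auto
  next
    case False
    then have xp: "0 < x" using x0 by simp
    have meas: "g x y \<in> borel_measurable (lebesgue_on {0<..x})"
      by (rule continuous_imp_measurable_on_sets_lebesgue[OF cont_g]) auto
    have UAi: "(UA K x has_integral CA) {0<..x}" unfolding CA_def by (rule UA_int[OF xp])
    have UAint: "UA K x integrable_on {0<..x}" using UAi by blast
    have bd: "g x y c \<le> UA K x c" if "c \<in> {0<..x}" for c
      using gA[of x y c] xp xy that by simp
    have nn: "0 \<le> g x y c" if "c \<in> {0<..x}" for c
      using g_nonneg[of x y c] xp xy that by simp
    have int: "g x y integrable_on {0<..x}"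
    proof (rule measurable_bounded_by_integrable_imp_integrable_real[OF meas UAint])
      fix c assume "c \<in> {0<..x}"
      then show "\<bar>g x y c\<bar> \<le> UA K x c" using bd nn by (simp add: abs_of_nonneg)
    qed simp
    have le: "integral {0<..x} (g x y) \<le> integral {0<..x} (UA K x)"
      by (rule integral_le[OF int UAint bd])
    have ge: "0 \<le> integral {0<..x} (g x y)"
      by (rule integral_nonneg[OF int nn])
    have "integral {0<..x} (UA K x) = CA" using UAi by (rule integral_unique)
    moreover have "(g x y has_integral integral {0<..x} (g x y)) {0<..x}" using int by (rule integrable_integral)
    ultimately show ?thesis using that[of "integral {0<..x} (g x y)"] le ge by simp
  qed
  obtain i3 where i3: "(g x y has_integral i3) {y<..}" "0 \<le> i3" "i3 \<le> CB"
  proof -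
    have meas: "g x y \<in> borel_measurable (lebesgue_on {y<..})"
      by (rule continuous_imp_measurable_on_sets_lebesgue[OF cont_g]) (use y0 in auto)
    have UBi: "(UB K y (y - x) has_integral (K * (ln (y + (y - x)) - ln y) + K)) {y<..}"
      by (rule UB_int) (use y0 xy in auto)
    have UBint: "UB K y (y - x) integrable_on {y<..}" using UBi by blast
    have bd: "g x y c \<le> UB K y (y - x) c" if "c \<in> {y<..}" for c
      using gB[of x y c] x0 xy that by simp
    have nn: "0 \<le> g x y c" if "c \<in> {y<..}" for c
      using g_nonneg[of x y c] x0 xy that by simp
    have int: "g x y integrable_on {y<..}"
    proof (rule measurable_bounded_by_integrable_imp_integrable_real[OF meas UBint])
      fix c assume "c \<in> {y<..}"
      then show "\<bar>g x y c\<bar> \<le> UB K y (y - x) c" using bd nn by (simp add: abs_of_nonneg)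
    qed simp
    have "integral {y<..} (g x y) \<le> integral {y<..} (UB K y (y - x))"
      by (rule integral_le[OF int UBint bd])
    also have "\<dots> = K * (ln (y + (y - x)) - ln y) + K" using UBi by (rule integral_unique)
    also have "\<dots> \<le> CB"
    proof -
      have "ln (y + (y - x)) \<le> ln (2 * y)" using x0 xy by (subst ln_le_cancel_iff) auto
      also have "\<dots> = ln 2 + ln y" using y0 by (simp add: ln_mult)
      finally have "ln (y + (y - x)) - ln y \<le> ln 2" by simp
      then show ?thesis unfolding CB_def using K_nonneg
        by (simp add: mult_left_mono distrib_left)
    qed
    finally have "integral {y<..} (g x y) \<le> CB" .
    moreover have "0 \<le> integral {y<..} (g x y)"
      by (rule integral_nonneg[OF int nn])
    moreover have "(g x y has_integral integral {y<..} (g x y)) {y<..}" using int by (rule integrable_integral)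
    ultimately show ?thesis using that[of "integral {y<..} (g x y)"] by simp
  qed
  have constI: "(\<lambda>c. 2 * f 0) integrable_on {x<..y}"
    using Ioc_from_Icc[OF has_integral_const_real[of "2 * f 0" x y]] by blast
  have measg: "g x y \<in> borel_measurable (lebesgue_on {x<..y})"
    by (rule continuous_imp_measurable_on_sets_lebesgue[OF cont_g]) (use x0 in auto)
  have measp: "psi \<in> borel_measurable (lebesgue_on {x<..y})"
    by (rule continuous_imp_measurable_on_sets_lebesgue[OF cont_psi]) (use x0 in auto)
  have nng: "0 \<le> g x y c" if "c \<in> {x<..y}" for c
    using g_nonneg[of x y c] x0 xy that by simp
  have gpsi: "g x y c \<le> psi c" if "c \<in> {x<..y}" for c
    using g_le_psi[of x c y] x0 that by simp
  have psib: "0 \<le> psi c" "psi c \<le> 2 * f 0" if "c \<in> {x<..y}" for c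
    using psi_bd[of c] x0 that by simp_all
  have intg: "g x y integrable_on {x<..y}"
  proof (rule measurable_bounded_by_integrable_imp_integrable_real[OF measg constI])
    fix c assume c: "c \<in> {x<..y}"
    then show "\<bar>g x y c\<bar> \<le> 2 * f 0"
      using nng[OF c] gpsi[OF c] psib[OF c] by (simp add: abs_of_nonneg)
  qed simp
  have intp: "psi integrable_on {x<..y}"
  proof (rule measurable_bounded_by_integrable_imp_integrable_real[OF measp constI])
    fix c assume c: "c \<in> {x<..y}"
    then show "\<bar>psi c\<bar> \<le> 2 * f 0" using psib[OF c] by (simp add: abs_of_nonneg)
  qed simp
  have intd: "(\<lambda>c. psi c - g x y c) integrable_on {x<..y}" using intp intg by (rule integrable_diff)
  have d_eq: "integral {x<..y} (\<lambda>c. psi c - g x y c) = integral {x<..y} psi - integral {x<..y} (g x y)"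
    using intp intg by (rule integral_diff)
  have d0: "0 \<le> integral {x<..y} (\<lambda>c. psi c - g x y c)"
  proof (rule integral_nonneg[OF intd])
    fix c assume "c \<in> {x<..y}" then show "0 \<le> psi c - g x y c" using gpsi[of c] by simp
  qed
  have gC2: "psi c - g x y c \<le> UA K y c + (if 0 < x then UB K x x c else 0)" if "c \<in> {x<..y}" for c
    using gC(2)[of x c y] x0 that by simp
  have UAsub: "UA K y integrable_on {x<..y}" "integral {x<..y} (UA K y) \<le> CA"
  proof -
    have a: "(UA K y has_integral CA) {0..y}" unfolding CA_def by (rule UA_int0[OF y0])
    have "{x..y} \<subseteq> {0..y}" using x0 by auto
    then have "UA K y integrable_on {x..y}" using integrable_on_subinterval[of "UA K y" "{0..y}" x y] a by blast
    then show i: "UA K y integrable_on {x<..y}" using Ioc_int_eq_rev by blast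
    have b: "(UA K y has_integral CA) {0<..y}" unfolding CA_def by (rule UA_int[OF y0])
    have "integral {x<..y} (UA K y) \<le> integral {0<..y} (UA K y)"
    proof (rule integral_subset_le)
      show "{x<..y} \<subseteq> {0<..y}" using x0 by auto
      show "UA K y integrable_on {0<..y}" using b by blast
      show "\<forall>c\<in>{0<..y}. 0 \<le> UA K y c" using UA_nonneg[OF y0] by simp
    qed fact
    also have "\<dots> = CA" using b by (rule integral_unique)
    finally show "integral {x<..y} (UA K y) \<le> CA" .
  qed
  have dCA: "integral {x<..y} (\<lambda>c. psi c - g x y c) \<le> CA + CB"
  proof (cases "x = 0")
    case True
    have "integral {x<..y} (\<lambda>c. psi c - g x y c) \<le> integral {x<..y} (UA K y)"
    proof (rule integral_le[OF intd UAsub(1)])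
      fix c assume "c \<in> {x<..y}" then show "psi c - g x y c \<le> UA K y c" using gC2[of c] True by simp
    qed
    then show ?thesis using UAsub(2) CB0 by linarith
  next
    case False
    then have xp: "0 < x" using x0 by simp
    have UBsub: "UB K x x integrable_on {x<..y}" "integral {x<..y} (UB K x x) \<le> CB"
    proof -
      have a: "(UB K x x has_integral (K * (ln (x + x) - ln x) + K)) {x..}" using UB_int0[of x x K] xp by simp
      have "{x..y} \<subseteq> {x..}" by auto
      then have "UB K x x integrable_on {x..y}" using integrable_on_subinterval[of "UB K x x" "{x..}" x y] a by blast
      then show i: "UB K x x integrable_on {x<..y}" using Ioc_int_eq_rev by blast
      have b: "(UB K x x has_integral (K * (ln (x + x) - ln x) + K)) {x<..}" using UB_int[of x x K] xp by simp
      have "integral {x<..y} (UB K x x) \<le> integral {x<..} (UB K x x)"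
      proof (rule integral_subset_le)
        show "{x<..y} \<subseteq> {x<..}" by auto
        show "UB K x x integrable_on {x<..}" using b by blast
        show "\<forall>c\<in>{x<..}. 0 \<le> UB K x x c" using UB_nonneg[of _ x x] xp by simp
      qed fact
      also have "\<dots> = K * (ln (x + x) - ln x) + K" using b by (rule integral_unique)
      also have "\<dots> = CB"
      proof -
        have xx: "x + x = 2 * x" by simp
        have "ln (x + x) = ln 2 + ln x" unfolding xx using xp by (simp add: ln_mult)
        then show ?thesis unfolding CB_def by (simp add: algebra_simps)
      qed
      finally show "integral {x<..y} (UB K x x) \<le> CB" .
    qed
    have "integral {x<..y} (\<lambda>c. psi c - g x y c) \<le> integral {x<..y} (\<lambda>c. UA K y c + UB K x x c)"
    proof (rule integral_le[OF intd integrable_add[OF UAsub(1) UBsub(1)]])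
      fix c assume "c \<in> {x<..y}" then show "psi c - g x y c \<le> UA K y c + UB K x x c" using gC2[of c] xp by simp
    qed
    also have "\<dots> = integral {x<..y} (UA K y) + integral {x<..y} (UB K x x)"
      by (rule integral_add[OF UAsub(1) UBsub(1)])
    finally show ?thesis using UAsub(2) UBsub(2) by linarith
  qed
  define i2 where "i2 = integral {x<..y} (g x y)"
  have i2i: "(g x y has_integral i2) {x<..y}" unfolding i2_def using intg by (rule integrable_integral)
  have "(g x y has_integral (i1 + i2)) ({0<..x} \<union> {x<..y})"
  proof (rule has_integral_Un[OF i1(1) i2i])
    have "{0<..x} \<inter> {x<..y} = {}" by auto
    then show "negligible ({0<..x} \<inter> {x<..y})" by (metis negligible_empty)
  qed
  moreover have "{0<..x} \<union> {x<..y} = {0<..y}" using x0 xy by auto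
  ultimately have "(g x y has_integral (i1 + i2)) {0<..y}" by simp
  then have "(g x y has_integral (i1 + i2 + i3)) ({0<..y} \<union> {y<..})"
  proof (rule has_integral_Un[OF _ i3(1)])
    have "{0<..y} \<inter> {y<..} = {}" by auto
    then show "negligible ({0<..y} \<inter> {y<..})" by (metis negligible_empty)
  qed
  moreover have "{0<..y} \<union> {y<..} = {0<..}" using y0 by auto
  ultimately have tot: "(g x y has_integral (i1 + i2 + i3)) {0<..}" by simp
  have m: "integral {x..y} psi = integral {x<..y} psi" using Ioc_int_eq[OF intp] by simp
  have I: "integral {0<..} (g x y) = i1 + i2 + i3" using tot by (rule integral_unique)
  show "g x y integrable_on {0<..}" using tot by blast
  have i20: "0 \<le> i2" unfolding i2_def by (rule integral_nonneg[OF intg nng])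
  show "0 \<le> integral {0<..} (g x y)" using I i1 i3 i20 by linarith
  show "integral {0<..} (g x y) - integral {x..y} psi \<le> K * (2/3 + ln 4) + K * (ln 2 + 1)"
    using I m d_eq d0 i1 i3 unfolding CA_def[symmetric] CB_def[symmetric] i2_def by linarith
  show "- (K * (2/3 + ln 4) + K * (ln 2 + 1)) \<le> integral {0<..} (g x y) - integral {x..y} psi"
    using I m d_eq dCA i1 i3 unfolding CA_def[symmetric] CB_def[symmetric] i2_def by linarith
qed

end


theorem lemma5p7:
  fixes \<mu> \<nu> :: real and F f :: "real \<Rightarrow> real"
  assumes mu: "\<mu> > 1/2" and nu: "0 < \<nu>" "\<nu> < 1/2"
    and deriv: "\<And>x. (F has_real_derivative f x) (at x)"
    and cont: "continuous_on UNIV f"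
    and even: "\<And>x. f (- x) = f x"
    and nonneg: "\<And>x. f x \<ge> 0"
    and decr: "antimono_on {0..} f"
    and limits: "\<exists>Lp Lm. (F \<longlongrightarrow> Lp) at_top \<and> (F \<longlongrightarrow> Lm) at_bot \<and> Lp - Lm = (\<mu> - \<nu>) * pi"
  shows "(\<forall>x. HFdiff F 0 (- x) = HFdiff F 0 x)
       \<and> mono_on {0..} (\<lambda>x. HFdiff F 0 x)
       \<and> (\<forall>x y. 0 \<le> x \<and> x < y \<longrightarrow>
            0 \<le> HFdiff F x y \<and>
            (let R = HFdiff F x y - (1 / pi) * integral {x..y} (\<lambda>\<gamma>. (F \<gamma> - F (- \<gamma>)) / \<gamma>)
             in - 2 * (\<mu> - \<nu>) \<le> R \<and> R \<le> 2 * (\<mu> - \<nu>)))"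
proof -
  obtain Lp Lm where Lp: "(F \<longlongrightarrow> Lp) at_top" and Lm: "(F \<longlongrightarrow> Lm) at_bot"
    and LL: "Lp - Lm = (\<mu> - \<nu>) * pi" using limits by blast
  have monF: "F a \<le> F b" if "a \<le> b" for a b
    by (rule DERIV_nonneg_imp_nondecreasing[OF that]) (use deriv nonneg in blast)
  have FLp: "F t \<le> Lp" for t
  proof (rule tendsto_lowerbound[OF Lp])
    show "\<forall>\<^sub>F s in at_top. F t \<le> F s" unfolding eventually_at_top_linorder using monF by blast
  qed simp
  have decr': "f b \<le> f a" if "0 \<le> a" "a \<le> b" for a b
    using decr that unfolding monotone_on_def by auto
  interpret H: hset F f "Lp - F 0"
    by unfold_locales (use deriv even nonneg decr' FLp in auto)
  have "((\<lambda>t. 2 * F 0 - F (- t)) \<longlongrightarrow> 2 * F 0 - Lp) at_bot"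
    by (intro tendsto_diff tendsto_const filterlim_compose[OF Lp filterlim_uminus_at_top_at_bot])
  moreover have "(\<lambda>t. 2 * F 0 - F (- t)) = F" using H.odd by (auto simp: fun_eq_iff)
  ultimately have "(F \<longlongrightarrow> 2 * F 0 - Lp) at_bot" by simp
  then have Lm_eq: "Lm = 2 * F 0 - Lp" using tendsto_unique[OF _ Lm] by simp
  define K where "K = Lp - F 0"
  have e: "(\<mu> - \<nu>) * pi = 2 * Lp - 2 * F 0" using LL Lm_eq by simp
  have K_eq: "4 * K = 2 * (\<mu> - \<nu>) * pi" unfolding K_def mult.assoc e by simp
  have HF: "HFdiff F x y = (1 / pi) * integral {0<..} (H.g x y)" for x y
    unfolding HFdiff_def H.g_eq ..
  have P1: "\<forall>x. HFdiff F 0 (- x) = HFdiff F 0 x"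
  proof
    fix x
    have "(\<lambda>c. (F (- x - c) - F (- x + c) - F (0 - c) + F (0 + c)) / c)
        = (\<lambda>c. (F (x - c) - F (x + c) - F (0 - c) + F (0 + c)) / c)"
    proof
      fix c
      have e1: "- x - c = - (x + c)" "- x + c = - (x - c)" by simp_all
      have "F (- x - c) = 2 * F 0 - F (x + c)" unfolding e1 by (rule H.odd)
      moreover have "F (- x + c) = 2 * F 0 - F (x - c)" unfolding e1 by (rule H.odd)
      ultimately show "(F (- x - c) - F (- x + c) - F (0 - c) + F (0 + c)) / c
        = (F (x - c) - F (x + c) - F (0 - c) + F (0 + c)) / c" by simp
    qed
    then show "HFdiff F 0 (- x) = HFdiff F 0 x" unfolding HFdiff_def by simp
  qed
  have P3: "0 \<le> HFdiff F x y" if "0 \<le> x" "x < y" for x y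
    using H.main_int(2)[OF that] unfolding HF by simp
  have g00: "H.g 0 0 = (\<lambda>c. 0)" by (rule ext) (simp add: H.g_def H.num_def)
  have P2: "mono_on {0..} (\<lambda>x. HFdiff F 0 x)"
  proof (rule monotone_onI)
    fix a b :: real assume ab: "a \<in> {0..}" "b \<in> {0..}" "a \<le> b"
    show "HFdiff F 0 a \<le> HFdiff F 0 b"
    proof (cases "a = b")
      case False
      then have ab': "a < b" using ab by simp
      show ?thesis
      proof (cases "a = 0")
        case True
        have "HFdiff F 0 a = 0" unfolding HF True g00 by simp
        then show ?thesis using P3[of 0 b] ab' True by simp
      next
        case False
        then have a0: "0 < a" using ab by simp
        have "H.g 0 b = (\<lambda>c. H.g 0 a c + H.g a b c)"
          by (rule ext) (simp add: H.g_def H.num_def add_divide_distrib[symmetric] diff_divide_distrib[symmetric] algebra_simps)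
        then have "integral {0<..} (H.g 0 b) = integral {0<..} (H.g 0 a) + integral {0<..} (H.g a b)"
          using integral_add[OF H.main_int(1)[of 0 a] H.main_int(1)[of a b]] a0 ab' by simp
        moreover have "0 \<le> integral {0<..} (H.g a b)" using H.main_int(2)[of a b] a0 ab' by simp
        ultimately show ?thesis unfolding HF by (simp add: divide_right_mono)
      qed
    qed simp
  qed
  have ln2: "ln 2 \<le> (7/9::real)" by (rule ln2_bound)
  have Cb: "K * (2/3 + ln 4) + K * (ln 2 + 1) \<le> 4 * K"
  proof -
    have "K * (2/3 + ln 4) + K * (ln 2 + 1) = K * (5/3 + 3 * ln 2)" using ln4 by (simp add: algebra_simps)
    also have "\<dots> \<le> K * 4" using ln2 H.K_nonneg unfolding K_def[symmetric] by (intro mult_left_mono) auto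
    finally show ?thesis by simp
  qed
  have P4: "- 2 * (\<mu> - \<nu>) \<le> R \<and> R \<le> 2 * (\<mu> - \<nu>)"
    if xy: "0 \<le> x" "x < y"
      and R: "R = HFdiff F x y - (1 / pi) * integral {x..y} (\<lambda>\<gamma>. (F \<gamma> - F (- \<gamma>)) / \<gamma>)" for x y R
  proof -
    define D where "D = integral {0<..} (H.g x y) - integral {x..y} H.psi"
    have RD: "R = D / pi" unfolding R D_def HF H.psi_eq by (simp add: diff_divide_distrib)
    have "D \<le> 4 * K" "- (4 * K) \<le> D"
      using H.main_int(3,4)[OF xy] Cb unfolding D_def K_def by linarith+
    then have "D \<le> 2 * (\<mu> - \<nu>) * pi" "- (2 * (\<mu> - \<nu>) * pi) \<le> D" using K_eq by simp_all
    moreover have "(- 2 * (\<mu> - \<nu>)) * pi = - (2 * (\<mu> - \<nu>) * pi)" by (simp only: mult_minus_left)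
    ultimately have d1: "D \<le> 2 * (\<mu> - \<nu>) * pi" and d2: "(- 2 * (\<mu> - \<nu>)) * pi \<le> D" by linarith+
    have "D / pi \<le> 2 * (\<mu> - \<nu>)" using d1 pi_gt_zero by (subst pos_divide_le_eq) auto
    moreover have "- 2 * (\<mu> - \<nu>) \<le> D / pi" using d2 pi_gt_zero by (subst pos_le_divide_eq) auto
    ultimately show ?thesis unfolding RD by simp
  qed
  show ?thesis using P1 P2 P3 P4 by (simp add: Let_def)
qed

end
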